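(* Let $G=(V,E)$ be a finite simple graph of order $n$, let $T=n-1$, and let $k$ be an integer with $k\leq\mathrm{PT}(G)$. If $(x,y,z)$ is an optimal solution of the integer program with the constraints of the Time Step Model $\mathrm{TSM}(G,T)$ together with the additional constraint $\sum_{t\in[T]}z^t\geq k$, and objective "minimize $\sum_{v\in V}x^0_v+\frac{1}{2T}\sum_{t\in[T]}z^t$", then $C=\{v\in V\colon x^0_v=1\}$ is a minimum zero forcing set of $G$ with $\mathrm{pt}(G,C)=\sum_{t\in[T]}z^t\geq k$. Furthermore, there is no minimum zero forcing set $\hat C$ of $G$ with $k<\mathrm{pt}(G,\hat C)<\mathrm{pt}(G,C)$.
   Context: Zero forcing: under the standard color change rule a filled vertex $u$ can force a non-filled vertex $v$ if $v$ is the only non-filled neighbor of $u$; $C\subseteq V$ is a zero forcing set if, starting with $C$ filled and repeatedly forcing, all of $V$ becomes filled; a minimum zero forcing set is one of minimum size. The propagation time $\mathrm{pt}(G,C)$ is the smallest $t^*$ such that, starting from $C^{[0]}=C$ and setting $C^{[t]}=C^{[t-1]}\cup\{v\notin C^{[t-1]}\colon$ some $u\in C^{[t-1]}$ has $v$ as its only neighbor outside $C^{[t-1]}\}$, one has $C^{[t^*]}=V$ ($\infty$ if $C$ is not a zero forcing set). $\mathrm{PT}(G)=\max\{\mathrm{pt}(G,C)\colon C$ a minimum zero forcing set$\}$. $N(u)$ is the neighborhood of $u$ and $d(u)=|N(u)|$. Time Step Model constraints: $A$ is the set of arcs containing $(u,v)$ and $(v,u)$ for each edge $\{u,v\}$,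 $[T]=\{1,\dots,T\}$. Binary variables $x^t_v$ ($v\in V$, $t\in\{0,\dots,T\}$), $y^t_a$ ($a\in A$, $t\in[T]$), $z^t$ ($t\in[T]$), with constraints: (1) $x^0_v+\sum_{t\in[T]}\sum_{a=(u,v)\in A}y^t_a=1$ for all $v$; (2) $y^t_a\leq x^{t-1}_u$ for all $a=(u,v)\in A$, $t\in[T]$; (3) $y^t_a\leq x^{t-1}_w$ for all $a=(u,v)\in A$, $w\in N(u)\setminus\{v\}$, $t\in[T]$; (4) $x^t_v=x^{t-1}_v+\sum_{a=(u,v)\in A}y^t_a$ for all $v$, $t\in[T]$; (5) $x^{t-1}_u-x^{t-1}_v+\sum_{w\in N(u)\setminus\{v\}}x^{t-1}_w\leq\sum_{a=(w,v)\in A}y^t_a+d(u)-1$ for all $(u,v)\in A$, $t\in[T]$; (6) $\frac1n\sum_{v\in V}(x^t_v-x^{t-1}_v)-z^t\leq0$ for all $t\in[T]$; (7) $z^t-\sum_{v\in V}(x^t_v-x^{t-1}_v)\leq 0$ for all $t\in[T]$. *)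

theory Defs
  imports Complex_Main "HOL-Library.Extended_Nat"
begin

definition simple_graph :: "'a set \<Rightarrow> ('a \<Rightarrow> 'a \<Rightarrow> bool) \<Rightarrow> bool" where
  "simple_graph V E \<longleftrightarrow> finite V \<and> (\<forall>u v. E u v \<longrightarrow> u \<in> V \<and> v \<in> V)
     \<and> (\<forall>u v. E u v \<longrightarrow> E v u) \<and> (\<forall>u. \<not> E u u)"

definition nbhd :: "'a set \<Rightarrow> ('a \<Rightarrow> 'a \<Rightarrow> bool) \<Rightarrow> 'a \<Rightarrow> 'a set" where
  "nbhd V E u = {w \<in> V. E u w}"

definition deg :: "'a set \<Rightarrow> ('a \<Rightarrow> 'a \<Rightarrow> bool) \<Rightarrow> 'a \<Rightarrow> nat" where
  "deg V E u = card (nbhd V E u)"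

inductive_set filled :: "'a set \<Rightarrow> ('a \<Rightarrow> 'a \<Rightarrow> bool) \<Rightarrow> 'a set \<Rightarrow> 'a set"
  for V E C where
  init: "v \<in> C \<Longrightarrow> v \<in> filled V E C"
| force: "u \<in> filled V E C \<Longrightarrow> v \<in> nbhd V E u \<Longrightarrow>
          (\<forall>w \<in> nbhd V E u - {v}. w \<in> filled V E C) \<Longrightarrow> v \<in> filled V E C"

definition zero_forcing_set :: "'a set \<Rightarrow> ('a \<Rightarrow> 'a \<Rightarrow> bool) \<Rightarrow> 'a set \<Rightarrow> bool" where
  "zero_forcing_set V E C \<longleftrightarrow> C \<subseteq> V \<and> filled V E C = V"

definition min_zero_forcing_set :: "'a set \<Rightarrow> ('a \<Rightarrow> 'a \<Rightarrow> bool) \<Rightarrow> 'a set \<Rightarrow> bool" where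
  "min_zero_forcing_set V E C \<longleftrightarrow> zero_forcing_set V E C \<and>
     (\<forall>D. zero_forcing_set V E D \<longrightarrow> card C \<le> card D)"

definition prop_step :: "'a set \<Rightarrow> ('a \<Rightarrow> 'a \<Rightarrow> bool) \<Rightarrow> 'a set \<Rightarrow> 'a set" where
  "prop_step V E S = S \<union> {v. v \<notin> S \<and> (\<exists>u \<in> S. v \<in> nbhd V E u \<and> nbhd V E u - S = {v})}"

definition prop_time :: "'a set \<Rightarrow> ('a \<Rightarrow> 'a \<Rightarrow> bool) \<Rightarrow> 'a set \<Rightarrow> enat" where
  "prop_time V E C = (if \<exists>t. (prop_step V E ^^ t) C = V
     then enat (LEAST t. (prop_step V E ^^ t) C = V) else \<infinity>)"

definition PT :: "'a set \<Rightarrow> ('a \<Rightarrow> 'a \<Rightarrow> bool) \<Rightarrow> enat" where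
  "PT V E = Sup (prop_time V E ` {C. min_zero_forcing_set V E C})"

definition TSM :: "'a set \<Rightarrow> ('a \<Rightarrow> 'a \<Rightarrow> bool) \<Rightarrow> nat \<Rightarrow>
    ('a \<Rightarrow> nat \<Rightarrow> real) \<Rightarrow> ('a \<times> 'a \<Rightarrow> nat \<Rightarrow> real) \<Rightarrow> (nat \<Rightarrow> real) \<Rightarrow> bool" where
  "TSM V E T x y z \<longleftrightarrow>
     (\<forall>v \<in> V. \<forall>t \<le> T. x v t \<in> {0, 1}) \<and>
     (\<forall>u v. E u v \<longrightarrow> (\<forall>t \<in> {1..T}. y (u, v) t \<in> {0, 1})) \<and>
     (\<forall>t \<in> {1..T}. z t \<in> {0, 1}) \<and>
     (\<forall>v \<in> V. x v 0 + (\<Sum>t\<in>{1..T}. \<Sum>u\<in>nbhd V E v. y (u, v) t) = 1) \<and>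
     (\<forall>u v. E u v \<longrightarrow> (\<forall>t \<in> {1..T}. y (u, v) t \<le> x u (t - 1))) \<and>
     (\<forall>u v. E u v \<longrightarrow> (\<forall>w \<in> nbhd V E u - {v}. \<forall>t \<in> {1..T}. y (u, v) t \<le> x w (t - 1))) \<and>
     (\<forall>v \<in> V. \<forall>t \<in> {1..T}. x v t = x v (t - 1) + (\<Sum>u\<in>nbhd V E v. y (u, v) t)) \<and>
     (\<forall>u v. E u v \<longrightarrow> (\<forall>t \<in> {1..T}.
        x u (t - 1) - x v (t - 1) + (\<Sum>w\<in>nbhd V E u - {v}. x w (t - 1))
          \<le> (\<Sum>w\<in>nbhd V E v. y (w, v) t) + real (deg V E u) - 1)) \<and>
     (\<forall>t \<in> {1..T}. (1 / real (card V)) * (\<Sum>v\<in>V. x v t - x v (t - 1)) - z t \<le> 0) \<and>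
     (\<forall>t \<in> {1..T}. z t - (\<Sum>v\<in>V. x v t - x v (t - 1)) \<le> 0)"

definition TSM_k :: "'a set \<Rightarrow> ('a \<Rightarrow> 'a \<Rightarrow> bool) \<Rightarrow> nat \<Rightarrow> int \<Rightarrow>
    ('a \<Rightarrow> nat \<Rightarrow> real) \<Rightarrow> ('a \<times> 'a \<Rightarrow> nat \<Rightarrow> real) \<Rightarrow> (nat \<Rightarrow> real) \<Rightarrow> bool" where
  "TSM_k V E T k x y z \<longleftrightarrow> TSM V E T x y z \<and> (\<Sum>t\<in>{1..T}. z t) \<ge> real_of_int k"

definition TSM_obj :: "'a set \<Rightarrow> nat \<Rightarrow> ('a \<Rightarrow> nat \<Rightarrow> real) \<Rightarrow> (nat \<Rightarrow> real) \<Rightarrow> real" where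
  "TSM_obj V T x z = (\<Sum>v\<in>V. x v 0) + (1 / (2 * real T)) * (\<Sum>t\<in>{1..T}. z t)"

end

theory Submission
  imports Defs
begin

definition Fi :: "'a set \<Rightarrow> ('a \<Rightarrow> 'a \<Rightarrow> bool) \<Rightarrow> 'a set \<Rightarrow> nat \<Rightarrow> 'a set" where
  "Fi V E C t = (prop_step V E ^^ t) C"

lemma Fi_0[simp]: "Fi V E C 0 = C" by (simp add: Fi_def)
lemma Fi_Suc[simp]: "Fi V E C (Suc t) = prop_step V E (Fi V E C t)" by (simp add: Fi_def)

lemma prop_step_ext: "S \<subseteq> prop_step V E S" by (auto simp: prop_step_def)

lemma nbhd_sub: "nbhd V E u \<subseteq> V" by (auto simp: nbhd_def)

lemma prop_step_sub: "S \<subseteq> V \<Longrightarrow> prop_step V E S \<subseteq> V"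
  using nbhd_sub by (fastforce simp: prop_step_def)

lemma Fi_mono: "s \<le> t \<Longrightarrow> Fi V E C s \<subseteq> Fi V E C t"
  by (rule lift_Suc_mono_le[where f="Fi V E C"]) (simp_all add: prop_step_ext)

lemma Fi_sub: "C \<subseteq> V \<Longrightarrow> Fi V E C t \<subseteq> V"
  by (induction t) (auto dest: prop_step_sub)

lemma Fi_fix: "Fi V E C (Suc t) = Fi V E C t \<Longrightarrow> Fi V E C (t + j) = Fi V E C t"
  by (induction j) auto

lemma Fi_empty: "Fi V E {} t = {}"
  by (induction t) (auto simp: prop_step_def)

lemma prop_step_filled: "S \<subseteq> filled V E C \<Longrightarrow> prop_step V E S \<subseteq> filled V E C"
proof
  fix v assume S: "S \<subseteq> filled V E C" and v: "v \<in> prop_step V E S"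
  show "v \<in> filled V E C"
  proof (cases "v \<in> S")
    case True then show ?thesis using S by auto
  next
    case False
    then obtain u where u: "u \<in> S" "v \<in> nbhd V E u" "nbhd V E u - S = {v}"
      using v by (auto simp: prop_step_def)
    have "\<forall>w \<in> nbhd V E u - {v}. w \<in> filled V E C" using u S by blast
    then show ?thesis using u S by (blast intro: filled.force)
  qed
qed

lemma Fi_filled: "Fi V E C t \<subseteq> filled V E C"
proof (induction t)
  case 0 show ?case by (auto intro: filled.init)
next
  case (Suc t) then show ?case by (simp add: prop_step_filled)
qed

lemma filled_sub_aux: "v \<in> filled V E C \<Longrightarrow> C \<subseteq> V \<Longrightarrow> v \<in> V"
proof (induction rule: filled.induct)
  case (init v) then show ?case by auto
next
  case (force u v)
  have "v \<in> nbhd V E u" by fact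
  then show ?case using nbhd_sub[of V E u] by auto
qed

lemma filled_sub: "C \<subseteq> V \<Longrightarrow> filled V E C \<subseteq> V"
  using filled_sub_aux[of _ V E C] by (rule subsetI)

lemma finite_exists_common:
  assumes "finite A" "\<forall>w\<in>A. \<exists>t. w \<in> Fi V E C t"
  shows "\<exists>t. A \<subseteq> Fi V E C t"
  using assms
proof (induction A rule: finite_induct)
  case empty then show ?case by simp
next
  case (insert a A)
  obtain t1 where t1: "a \<in> Fi V E C t1" using insert.prems by blast
  obtain t2 where t2: "A \<subseteq> Fi V E C t2" using insert.prems insert.IH by blast
  have m1: "Fi V E C t1 \<subseteq> Fi V E C (max t1 t2)" by (rule Fi_mono) simp
  have m2: "Fi V E C t2 \<subseteq> Fi V E C (max t1 t2)" by (rule Fi_mono) simp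
  have "insert a A \<subseteq> Fi V E C (max t1 t2)" using t1 t2 m1 m2 by blast
  then show ?case by blast
qed

lemma filled_Fi:
  assumes fin: "finite V" and v: "v \<in> filled V E C"
  shows "\<exists>t. v \<in> Fi V E C t"
  using v
proof (induction rule: filled.induct)
  case (init v)
  then have "v \<in> Fi V E C 0" by simp
  then show ?case by (rule exI)
next
  case (force u v)
  note f = force
  from f(3) obtain a where a: "u \<in> Fi V E C a" by (elim exE)
  have "finite (nbhd V E u - {v})" using fin nbhd_sub[of V E u] finite_subset by auto
  moreover have "\<forall>w\<in>nbhd V E u - {v}. \<exists>t. w \<in> Fi V E C t" using f(4) by simp
  ultimately have "\<exists>b. nbhd V E u - {v} \<subseteq> Fi V E C b"
    by (rule finite_exists_common)
  then obtain b where b: "nbhd V E u - {v} \<subseteq> Fi V E C b" by blast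
  define t where "t = max a b"
  have ua: "u \<in> Fi V E C t" using a Fi_mono[of a t V E C] unfolding t_def by auto
  have bb: "nbhd V E u - {v} \<subseteq> Fi V E C t" using b Fi_mono[of b t V E C] unfolding t_def by auto
  show ?case
  proof (cases "v \<in> Fi V E C t")
    case True then show ?thesis by (rule exI)
  next
    case False
    have "nbhd V E u - Fi V E C t = {v}" using bb f(2) False by auto
    then have "v \<in> Fi V E C (Suc t)" using ua f(2) False
      by (auto simp: prop_step_def)
    then show ?thesis by (rule exI)
  qed
qed

lemma finite_V_Fi:
  assumes fin: "finite V" and C: "C \<subseteq> V" and zf: "filled V E C = V"
  shows "\<exists>t. Fi V E C t = V"
proof -
  have "\<forall>w\<in>V. \<exists>t. w \<in> Fi V E C t" using filled_Fi[OF fin, of _ E C] zf by auto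
  then have "\<exists>t. V \<subseteq> Fi V E C t" by (rule finite_exists_common[OF fin])
  then obtain t where "V \<subseteq> Fi V E C t" by blast
  then have "Fi V E C t = V" using Fi_sub[OF C, of E t] by auto
  then show ?thesis by (rule exI)
qed

lemma Fi_strict:
  assumes tp: "t < (LEAST t. Fi V E C t = V)" and ex: "Fi V E C q = V"
  shows "Fi V E C (Suc t) \<noteq> Fi V E C t"
proof
  assume eq: "Fi V E C (Suc t) = Fi V E C t"
  let ?p = "LEAST t. Fi V E C t = V"
  have pV: "Fi V E C ?p = V" using ex by (rule LeastI)
  have "Fi V E C (t + (?p - t)) = Fi V E C t" using eq by (rule Fi_fix)
  then have "Fi V E C t = V" using tp pV by simp
  then show False using not_less_Least[OF tp] by simp
qed

lemma card_growth:
  assumes fin: "finite V" and C: "C \<subseteq> V" and ex: "Fi V E C q = V"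
  shows "t \<le> (LEAST t. Fi V E C t = V) \<Longrightarrow> card C + t \<le> card (Fi V E C t)"
proof (induction t)
  case 0 then show ?case by simp
next
  case (Suc t)
  then have tp: "t < (LEAST t. Fi V E C t = V)" by simp
  have ne: "Fi V E C (Suc t) \<noteq> Fi V E C t" using Fi_strict[OF tp ex] .
  have sub: "Fi V E C t \<subseteq> Fi V E C (Suc t)" by (rule Fi_mono) simp
  have "finite (Fi V E C (Suc t))" using Fi_sub[OF C] fin finite_subset by metis
  then have "card (Fi V E C t) < card (Fi V E C (Suc t))"
    using sub ne by (intro psubset_card_mono) auto
  then show ?case using Suc tp by simp
qed

lemma pt_bound:
  assumes fin: "finite V" and C: "C \<subseteq> V" and Cne: "C \<noteq> {}" and ex: "Fi V E C q = V"
  shows "(LEAST t. Fi V E C t = V) \<le> card V - 1"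
proof -
  let ?p = "LEAST t. Fi V E C t = V"
  have pV: "Fi V E C ?p = V" using ex by (rule LeastI)
  have "card C + ?p \<le> card (Fi V E C ?p)" using card_growth[OF fin C ex] by simp
  moreover have "card C \<ge> 1" using Cne C fin finite_subset
    by (metis One_nat_def Suc_leI card_gt_0_iff)
  ultimately show ?thesis using pV by simp
qed

lemma Fi_T:
  assumes fin: "finite V" and C: "C \<subseteq> V" and Cne: "C \<noteq> {}" and ex: "Fi V E C q = V"
  shows "Fi V E C (card V - 1) = V"
proof -
  let ?p = "LEAST t. Fi V E C t = V"
  have pV: "Fi V E C ?p = V" using ex by (rule LeastI)
  have "Fi V E C ?p \<subseteq> Fi V E C (card V - 1)" using pt_bound[OF assms] by (rule Fi_mono)
  then show ?thesis using pV Fi_sub[OF C, of E "card V - 1"] by auto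
qed

lemma count_steps:
  assumes C: "C \<subseteq> V" and ex: "Fi V E C T = V"
  shows "{t \<in> {1..T}. Fi V E C t \<noteq> Fi V E C (t - 1)} = {1..(LEAST t. Fi V E C t = V)}"
    and "(LEAST t. Fi V E C t = V) \<le> T"
proof -
  let ?p = "LEAST t. Fi V E C t = V"
  have pV: "Fi V E C ?p = V" using ex by (rule LeastI)
  show pT: "?p \<le> T" using ex by (rule Least_le)
  show "{t \<in> {1..T}. Fi V E C t \<noteq> Fi V E C (t - 1)} = {1..?p}"
  proof (intro equalityI subsetI)
    fix t assume t: "t \<in> {t \<in> {1..T}. Fi V E C t \<noteq> Fi V E C (t - 1)}"
    show "t \<in> {1..?p}"
    proof (rule ccontr)
      assume "t \<notin> {1..?p}"
      then have tp: "?p \<le> t - 1" using t by auto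
      have a: "Fi V E C ?p \<subseteq> Fi V E C (t - 1)" using tp by (rule Fi_mono)
      have b: "Fi V E C ?p \<subseteq> Fi V E C t" using tp by (intro Fi_mono) simp
      have "Fi V E C (t - 1) = V" using a pV Fi_sub[OF C, of E "t - 1"] by auto
      moreover have "Fi V E C t = V" using b pV Fi_sub[OF C, of E t] by auto
      ultimately show False using t by simp
    qed
  next
    fix t assume t: "t \<in> {1..?p}"
    then have tp: "t - 1 < ?p" by auto
    have "Fi V E C (Suc (t - 1)) \<noteq> Fi V E C (t - 1)" using Fi_strict[OF tp ex] .
    moreover have "Suc (t - 1) = t" using t by auto
    ultimately show "t \<in> {t \<in> {1..T}. Fi V E C t \<noteq> Fi V E C (t - 1)}" using t pT by auto
  qed
qed

lemma prop_time_Fi: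
  assumes "Fi V E C T = V"
  shows "prop_time V E C = enat (LEAST t. Fi V E C t = V)"
  using assms unfolding prop_time_def Fi_def by auto

lemma TSM_D:
  assumes "TSM V E T x y z"
  shows TSM_x: "\<And>v t. v \<in> V \<Longrightarrow> t \<le> T \<Longrightarrow> x v t = 0 \<or> x v t = 1"
    and TSM_y: "\<And>u v t. E u v \<Longrightarrow> t \<in> {1..T} \<Longrightarrow> y (u, v) t = 0 \<or> y (u, v) t = 1"
    and TSM_z: "\<And>t. t \<in> {1..T} \<Longrightarrow> z t = 0 \<or> z t = 1"
    and TSM_1: "\<And>v. v \<in> V \<Longrightarrow> x v 0 + (\<Sum>t\<in>{1..T}. \<Sum>u\<in>nbhd V E v. y (u, v) t) = 1"
    and TSM_2: "\<And>u v t. E u v \<Longrightarrow> t \<in> {1..T} \<Longrightarrow> y (u, v) t \<le> x u (t - 1)"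
    and TSM_3: "\<And>u v w t. E u v \<Longrightarrow> w \<in> nbhd V E u - {v} \<Longrightarrow> t \<in> {1..T} \<Longrightarrow> y (u, v) t \<le> x w (t - 1)"
    and TSM_4: "\<And>v t. v \<in> V \<Longrightarrow> t \<in> {1..T} \<Longrightarrow> x v t = x v (t - 1) + (\<Sum>u\<in>nbhd V E v. y (u, v) t)"
    and TSM_5: "\<And>u v t. E u v \<Longrightarrow> t \<in> {1..T} \<Longrightarrow>
        x u (t - 1) - x v (t - 1) + (\<Sum>w\<in>nbhd V E u - {v}. x w (t - 1))
          \<le> (\<Sum>w\<in>nbhd V E v. y (w, v) t) + real (deg V E u) - 1"
    and TSM_6: "\<And>t. t \<in> {1..T} \<Longrightarrow> (1 / real (card V)) * (\<Sum>v\<in>V. x v t - x v (t - 1)) - z t \<le> 0"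
    and TSM_7: "\<And>t. t \<in> {1..T} \<Longrightarrow> z t - (\<Sum>v\<in>V. x v t - x v (t - 1)) \<le> 0"
  using assms unfolding TSM_def by auto

lemma sg_fin: "simple_graph V E \<Longrightarrow> finite V" by (simp add: simple_graph_def)
lemma sg_in: "simple_graph V E \<Longrightarrow> E u v \<Longrightarrow> u \<in> V \<and> v \<in> V" by (simp add: simple_graph_def)
lemma sg_sym: "simple_graph V E \<Longrightarrow> E u v \<Longrightarrow> E v u" by (simp add: simple_graph_def)
lemma nbhd_iff: "simple_graph V E \<Longrightarrow> u \<in> nbhd V E v \<longleftrightarrow> E v u"
  unfolding nbhd_def using sg_in by fastforce
lemma nbhd_fin: "simple_graph V E \<Longrightarrow> finite (nbhd V E v)"
  using sg_fin nbhd_sub finite_subset by metis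

lemma tsm_step:
  assumes G: "simple_graph V E" and tsm: "TSM V E T x y z" and t: "t \<in> {1..T}"
  shows "{v \<in> V. x v t = 1} = prop_step V E {v \<in> V. x v (t - 1) = 1}"
proof (intro equalityI subsetI)
  let ?X = "{v \<in> V. x v (t - 1) = 1}"
  have tT: "t \<le> T" "t - 1 \<le> T" using t by auto
  fix v
  assume "v \<in> {v \<in> V. x v t = 1}"
  then have vV: "v \<in> V" and xv: "x v t = 1" by auto
  have eq4: "x v t = x v (t - 1) + (\<Sum>u\<in>nbhd V E v. y (u, v) t)" using TSM_4[OF tsm vV t] .
  show "v \<in> prop_step V E ?X"
  proof (cases "x v (t - 1) = 1")
    case True then show ?thesis using vV by (auto simp: prop_step_def)
  next
    case False
    then have x0: "x v (t - 1) = 0" using TSM_x[OF tsm vV tT(2)] by auto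
    then have "(\<Sum>u\<in>nbhd V E v. y (u, v) t) \<noteq> 0" using eq4 xv by simp
    then obtain u where u: "u \<in> nbhd V E v" and yu: "y (u, v) t \<noteq> 0"
      by (meson sum.neutral)
    have Evu: "E v u" using u nbhd_iff[OF G] by simp
    have Euv: "E u v" using sg_sym[OF G Evu] .
    have uV: "u \<in> V" using sg_in[OF G Evu] by simp
    have y1: "y (u, v) t = 1" using TSM_y[OF tsm Euv t] yu by auto
    have "1 \<le> x u (t - 1)" using TSM_2[OF tsm Euv t] y1 by simp
    then have ux: "u \<in> ?X" using TSM_x[OF tsm uV tT(2)] uV by auto
    have others: "w \<in> ?X" if w: "w \<in> nbhd V E u - {v}" for w
    proof -
      have "1 \<le> x w (t - 1)" using TSM_3[OF tsm Euv w t] y1 by simp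
      moreover have wV: "w \<in> V" using w nbhd_sub[of V E u] by auto
      ultimately show ?thesis using TSM_x[OF tsm wV tT(2)] by auto
    qed
    have vu: "v \<in> nbhd V E u" using nbhd_iff[OF G] Euv by simp
    have "nbhd V E u - ?X = {v}" using others vu False by auto
    then show ?thesis using ux vu False by (auto simp: prop_step_def)
  qed
next
  let ?X = "{v \<in> V. x v (t - 1) = 1}"
  have tT: "t \<le> T" "t - 1 \<le> T" using t by auto
  fix v
  assume vp: "v \<in> prop_step V E ?X"
  have vV: "v \<in> V" using prop_step_sub[of ?X V E] vp by auto
  have eq4: "x v t = x v (t - 1) + (\<Sum>u\<in>nbhd V E v. y (u, v) t)" using TSM_4[OF tsm vV t] .
  have ynn: "(\<Sum>u\<in>nbhd V E v. y (u, v) t) \<ge> 0"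
  proof (rule sum_nonneg)
    fix u assume "u \<in> nbhd V E v"
    then have "E u v" using nbhd_iff[OF G] sg_sym[OF G] by blast
    then show "y (u, v) t \<ge> 0" using TSM_y[OF tsm _ t] by fastforce
  qed
  show "v \<in> {v \<in> V. x v t = 1}"
  proof (cases "x v (t - 1) = 1")
    case True
    then have "x v t \<ge> 1" using eq4 ynn by simp
    then show ?thesis using TSM_x[OF tsm vV tT(1)] vV by auto
  next
    case False
    then have x0: "x v (t - 1) = 0" using TSM_x[OF tsm vV tT(2)] by auto
    have "v \<notin> ?X" using False by simp
    then obtain u where ux: "u \<in> ?X" and vu: "v \<in> nbhd V E u" and nb: "nbhd V E u - ?X = {v}"
      using vp by (auto simp: prop_step_def)
    have Euv: "E u v" using vu nbhd_iff[OF G] by simp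
    have xu: "x u (t - 1) = 1" using ux by simp
    have allw: "\<forall>w \<in> nbhd V E u - {v}. x w (t - 1) = 1" using nb by blast
    have s1: "(\<Sum>w\<in>nbhd V E u - {v}. x w (t - 1)) = real (card (nbhd V E u - {v}))"
      using allw by simp
    have fin: "finite (nbhd V E u)" using nbhd_fin[OF G] .
    have cd: "card (nbhd V E u - {v}) = deg V E u - 1" unfolding deg_def
      using vu fin by (simp add: card_Diff_singleton)
    have dpos: "deg V E u \<ge> 1" unfolding deg_def using vu fin
      by (metis One_nat_def Suc_leI card_gt_0_iff empty_iff)
    have "real (card (nbhd V E u - {v})) = real (deg V E u) - 1" using cd dpos by simp
    then have "1 + (real (deg V E u) - 1) \<le> (\<Sum>w\<in>nbhd V E v. y (w, v) t) + real (deg V E u) - 1"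
      using TSM_5[OF tsm Euv t] xu x0 s1 by simp
    then have "x v t \<ge> 1" using eq4 x0 by simp
    then show ?thesis using TSM_x[OF tsm vV tT(1)] vV by auto
  qed
qed

lemma sum_binary:
  assumes "finite V" "\<And>v. v \<in> V \<Longrightarrow> f v = 0 \<or> f v = (1::real)"
  shows "(\<Sum>v\<in>V. f v) = real (card {v \<in> V. f v = 1})"
proof -
  have "(\<Sum>v\<in>V. f v) = (\<Sum>v\<in>V. of_bool (f v = 1))"
    using assms(2) by (intro sum.cong) auto
  also have "\<dots> = real (card (V \<inter> {v. f v = 1}))" using assms(1) by simp
  also have "V \<inter> {v. f v = 1} = {v \<in> V. f v = 1}" by auto
  finally show ?thesis .
qed

lemma tsm_X:
  assumes G: "simple_graph V E" and tsm: "TSM V E T x y z"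
  shows "t \<le> T \<Longrightarrow> {v \<in> V. x v t = 1} = Fi V E {v \<in> V. x v 0 = 1} t"
proof (induction t)
  case 0 then show ?case by simp
next
  case (Suc t)
  have "{v \<in> V. x v (Suc t) = 1} = prop_step V E {v \<in> V. x v (Suc t - 1) = 1}"
    using tsm_step[OF G tsm] Suc.prems by simp
  then show ?case using Suc by simp
qed

lemma tsm_tele:
  assumes tsm: "TSM V E T x y z" and vV: "v \<in> V"
  shows "t \<le> T \<Longrightarrow> x v t = x v 0 + (\<Sum>s\<in>{1..t}. \<Sum>u\<in>nbhd V E v. y (u, v) s)"
proof (induction t)
  case 0 then show ?case by simp
next
  case (Suc t)
  have "x v (Suc t) = x v t + (\<Sum>u\<in>nbhd V E v. y (u, v) (Suc t))"
    using TSM_4[OF tsm vV, of "Suc t"] Suc.prems by simp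
  then show ?case using Suc by simp
qed

lemma tsm_sound:
  assumes G: "simple_graph V E" and tsm: "TSM V E T x y z"
  defines "C \<equiv> {v \<in> V. x v 0 = 1}"
  shows "Fi V E C T = V"
    and "\<And>t. t \<in> {1..T} \<Longrightarrow> z t = of_bool (Fi V E C t \<noteq> Fi V E C (t - 1))"
    and "(\<Sum>v\<in>V. x v 0) = real (card C)"
proof -
  have fin: "finite V" using sg_fin[OF G] .
  have XF: "\<And>t. t \<le> T \<Longrightarrow> {v \<in> V. x v t = 1} = Fi V E C t"
    using tsm_X[OF G tsm] unfolding C_def by blast
  have "\<forall>v\<in>V. x v T = 1"
  proof
    fix v assume vV: "v \<in> V"
    show "x v T = 1" using tsm_tele[OF tsm vV, of T] TSM_1[OF tsm vV] by simp
  qed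
  then have "{v \<in> V. x v T = 1} = V" by auto
  then show FT: "Fi V E C T = V" using XF[of T] by simp
  show "(\<Sum>v\<in>V. x v 0) = real (card C)" unfolding C_def
    using sum_binary[OF fin, of "\<lambda>v. x v 0"] TSM_x[OF tsm] by simp
  fix t assume t: "t \<in> {1..T}"
  have tT: "t \<le> T" "t - 1 \<le> T" using t by auto
  have S: "(\<Sum>v\<in>V. x v s) = real (card (Fi V E C s))" if "s \<le> T" for s
    using sum_binary[OF fin, of "\<lambda>v. x v s"] TSM_x[OF tsm _ that] XF[OF that] by simp
  have D: "(\<Sum>v\<in>V. x v t - x v (t - 1)) = real (card (Fi V E C t)) - real (card (Fi V E C (t - 1)))"
    using S[OF tT(1)] S[OF tT(2)] by (simp add: sum_subtractf)
  have CV: "C \<subseteq> V" unfolding C_def by auto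
  have sub: "Fi V E C (t - 1) \<subseteq> Fi V E C t" by (rule Fi_mono) simp
  have finF: "finite (Fi V E C t)" using Fi_sub[OF CV] fin finite_subset by metis
  show "z t = of_bool (Fi V E C t \<noteq> Fi V E C (t - 1))"
  proof (cases "Fi V E C t = Fi V E C (t - 1)")
    case True
    then have "z t \<le> 0" using TSM_7[OF tsm t] D by simp
    then show ?thesis using TSM_z[OF tsm t] True by auto
  next
    case False
    then have "card (Fi V E C (t - 1)) < card (Fi V E C t)"
      using sub finF by (intro psubset_card_mono) auto
    then have Dp: "(\<Sum>v\<in>V. x v t - x v (t - 1)) > 0" using D by simp
    have "card (Fi V E C t) \<le> card V" using Fi_sub[OF CV] fin by (rule card_mono[rotated])
    then have "card V > 0" using \<open>card (Fi V E C (t - 1)) < card (Fi V E C t)\<close> by simp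
    then have "(1 / real (card V)) * (\<Sum>v\<in>V. x v t - x v (t - 1)) > 0" using Dp by simp
    then have "z t > 0" using TSM_6[OF tsm t] by simp
    then show ?thesis using TSM_z[OF tsm t] False by auto
  qed
qed

lemma tele_bool:
  "of_bool (v \<in> Fi V E C 0) + (\<Sum>s\<in>{1..t}. of_bool (v \<in> Fi V E C s \<and> v \<notin> Fi V E C (s - 1)))
     = (of_bool (v \<in> Fi V E C t) :: real)"
proof (induction t)
  case 0 then show ?case by simp
next
  case (Suc t)
  have "Fi V E C t \<subseteq> Fi V E C (Suc t)" by (rule Fi_mono) simp
  then have "of_bool (v \<in> Fi V E C t) + of_bool (v \<in> Fi V E C (Suc t) \<and> v \<notin> Fi V E C t)
      = (of_bool (v \<in> Fi V E C (Suc t)) :: real)" by auto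
  then show ?case using Suc by (simp add: add.assoc)
qed

lemma tsm_complete:
  assumes G: "simple_graph V E" and CV: "C \<subseteq> V" and FT: "Fi V E C T = V"
  shows "\<exists>x y z. TSM V E T x y z \<and> (\<Sum>v\<in>V. x v 0) = real (card C)
     \<and> (\<Sum>t\<in>{1..T}. z t) = real (LEAST t. Fi V E C t = V)"
proof -
  have fin: "finite V" using sg_fin[OF G] .
  let ?F = "Fi V E C"
  define P where "P t v u \<longleftrightarrow> u \<in> ?F (t - 1) \<and> v \<in> nbhd V E u \<and> nbhd V E u - ?F (t - 1) = {v}" for t v u
  define f where "f t v = (SOME u. P t v u)" for t v
  define new where "new t v \<longleftrightarrow> v \<in> ?F t \<and> v \<notin> ?F (t - 1)" for t v
  define x :: "'a \<Rightarrow> nat \<Rightarrow> real" where "x v t = of_bool (v \<in> ?F t)" for v t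
  define y :: "'a \<times> 'a \<Rightarrow> nat \<Rightarrow> real" where "y a t = of_bool (new t (snd a) \<and> fst a = f t (snd a))" for a t
  define z :: "nat \<Rightarrow> real" where "z t = of_bool (?F t \<noteq> ?F (t - 1))" for t
  have FV: "?F t \<subseteq> V" for t using Fi_sub[OF CV] .
  have Fm: "?F (t - 1) \<subseteq> ?F t" for t by (rule Fi_mono) simp
  have Pf: "P t v (f t v)" if "t \<ge> 1" "new t v" for t v
  proof -
    have "?F t = prop_step V E (?F (t - 1))" using that(1) Fi_Suc[of V E C "t - 1"] by simp
    then have "\<exists>u. P t v u" using that(2) unfolding new_def P_def prop_step_def by auto
    then show ?thesis unfolding f_def by (rule someI_ex)
  qed
  have sumy: "(\<Sum>u\<in>nbhd V E v. y (u, v) t) = of_bool (new t v)" if vV: "v \<in> V" and t1: "t \<ge> 1" for v t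
  proof (cases "new t v")
    case True
    have p: "P t v (f t v)" using Pf[OF t1 True] .
    have "f t v \<in> V" using p FV unfolding P_def by auto
    moreover have "E (f t v) v" using p nbhd_iff[OF G] unfolding P_def by auto
    ultimately have fn: "f t v \<in> nbhd V E v" using nbhd_iff[OF G] sg_sym[OF G] by blast
    have "(\<Sum>u\<in>nbhd V E v. y (u, v) t) = (\<Sum>u\<in>nbhd V E v. of_bool (u = f t v))"
      unfolding y_def using True by simp
    also have "\<dots> = real (card (nbhd V E v \<inter> {u. u = f t v}))" using nbhd_fin[OF G] by simp
    also have "nbhd V E v \<inter> {u. u = f t v} = {f t v}" using fn by auto
    finally show ?thesis using True by simp
  next
    case False
    then show ?thesis unfolding y_def by simp
  qed
  have c1: "\<forall>v \<in> V. \<forall>t \<le> T. x v t \<in> {0, 1}" unfolding x_def by simp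
  have c2: "\<forall>u v. E u v \<longrightarrow> (\<forall>t \<in> {1..T}. y (u, v) t \<in> {0, 1})" unfolding y_def by simp
  have c3: "\<forall>t \<in> {1..T}. z t \<in> {0, 1}" unfolding z_def by simp
  have c4: "\<forall>v \<in> V. x v 0 + (\<Sum>t\<in>{1..T}. \<Sum>u\<in>nbhd V E v. y (u, v) t) = 1"
  proof
    fix v assume vV: "v \<in> V"
    have "(\<Sum>t\<in>{1..T}. \<Sum>u\<in>nbhd V E v. y (u, v) t) = (\<Sum>t\<in>{1..T}. of_bool (new t v))"
      using sumy[OF vV] by (intro sum.cong) auto
    then show "x v 0 + (\<Sum>t\<in>{1..T}. \<Sum>u\<in>nbhd V E v. y (u, v) t) = 1"
      using tele_bool[of v V E C T] FT vV unfolding x_def new_def by simp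
  qed
  have c5: "\<forall>u v. E u v \<longrightarrow> (\<forall>t \<in> {1..T}. y (u, v) t \<le> x u (t - 1))"
  proof (intro allI impI ballI)
    fix u v t assume "E u v" and t: "t \<in> {1..T}"
    show "y (u, v) t \<le> x u (t - 1)"
    proof (cases "new t v \<and> u = f t v")
      case True
      then have "P t v u" using Pf[of t v] t by auto
      then show ?thesis unfolding x_def y_def P_def using True by simp
    next
      case False
      then have "y (u, v) t = 0" unfolding y_def by auto
      then show ?thesis unfolding x_def by simp
    qed
  qed
  have c6: "\<forall>u v. E u v \<longrightarrow> (\<forall>w \<in> nbhd V E u - {v}. \<forall>t \<in> {1..T}. y (u, v) t \<le> x w (t - 1))"
  proof (intro allI impI ballI)
    fix u v w t assume "E u v" and w: "w \<in> nbhd V E u - {v}" and t: "t \<in> {1..T}"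
    show "y (u, v) t \<le> x w (t - 1)"
    proof (cases "new t v \<and> u = f t v")
      case True
      then have "P t v u" using Pf[of t v] t by auto
      then have "w \<in> ?F (t - 1)" using w unfolding P_def by auto
      then show ?thesis unfolding x_def y_def by simp
    next
      case False
      then have "y (u, v) t = 0" unfolding y_def by auto
      then show ?thesis unfolding x_def by simp
    qed
  qed
  have c7: "\<forall>v \<in> V. \<forall>t \<in> {1..T}. x v t = x v (t - 1) + (\<Sum>u\<in>nbhd V E v. y (u, v) t)"
  proof (intro ballI)
    fix v t assume vV: "v \<in> V" and t: "t \<in> {1..T}"
    have "(\<Sum>u\<in>nbhd V E v. y (u, v) t) = of_bool (new t v)" using sumy[OF vV] t by simp
    then show "x v t = x v (t - 1) + (\<Sum>u\<in>nbhd V E v. y (u, v) t)"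
      using Fm[of t] unfolding x_def new_def by auto
  qed
  have c8: "\<forall>u v. E u v \<longrightarrow> (\<forall>t \<in> {1..T}.
        x u (t - 1) - x v (t - 1) + (\<Sum>w\<in>nbhd V E u - {v}. x w (t - 1))
          \<le> (\<Sum>w\<in>nbhd V E v. y (w, v) t) + real (deg V E u) - 1)"
  proof (intro allI impI ballI)
    fix u v t assume Euv: "E u v" and t: "t \<in> {1..T}"
    have vV: "v \<in> V" using sg_in[OF G Euv] by simp
    have vu: "v \<in> nbhd V E u" using nbhd_iff[OF G] Euv by simp
    have finN: "finite (nbhd V E u)" using nbhd_fin[OF G] .
    let ?A = "nbhd V E u - {v}"
    have cA: "card ?A = deg V E u - 1" unfolding deg_def using vu finN by (simp add: card_Diff_singleton)
    have dpos: "deg V E u \<ge> 1" unfolding deg_def using vu finN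
      by (metis One_nat_def Suc_leI card_gt_0_iff empty_iff)
    have rA: "real (card ?A) = real (deg V E u) - 1" using cA dpos by simp
    have S: "(\<Sum>w\<in>?A. x w (t - 1)) = real (card (?A \<inter> {w. w \<in> ?F (t - 1)}))"
      unfolding x_def using finN by simp
    have finA: "finite ?A" using finN by simp
    have le: "card (?A \<inter> {w. w \<in> ?F (t - 1)}) \<le> card ?A" using finA by (intro card_mono) auto
    have RHS: "(\<Sum>w\<in>nbhd V E v. y (w, v) t) = of_bool (new t v)" using sumy[OF vV] t by simp
    show "x u (t - 1) - x v (t - 1) + (\<Sum>w\<in>?A. x w (t - 1))
          \<le> (\<Sum>w\<in>nbhd V E v. y (w, v) t) + real (deg V E u) - 1"
    proof (cases "u \<in> ?F (t - 1) \<and> v \<notin> ?F (t - 1) \<and> ?A \<subseteq> ?F (t - 1)")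
      case True
      then have "nbhd V E u - ?F (t - 1) = {v}" using vu by auto
      then have "v \<in> prop_step V E (?F (t - 1))" using True vu unfolding prop_step_def by auto
      moreover have "?F t = prop_step V E (?F (t - 1))" using t Fi_Suc[of V E C "t - 1"] by simp
      ultimately have nw: "new t v" unfolding new_def using True by simp
      have "?A \<inter> {w. w \<in> ?F (t - 1)} = ?A" using True by auto
      then show ?thesis using True nw S RHS rA unfolding x_def by simp
    next
      case False
      have b: "x u (t - 1) - x v (t - 1) \<le> 1" unfolding x_def by simp
      have r0: "0 \<le> (\<Sum>w\<in>nbhd V E v. y (w, v) t)" using RHS by simp
      show ?thesis
      proof (cases "?A \<subseteq> ?F (t - 1)")
        case True
        then have "?A \<inter> {w. w \<in> ?F (t - 1)} = ?A" by auto
        moreover have "x u (t - 1) - x v (t - 1) \<le> 0" using False True unfolding x_def by auto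
        ultimately show ?thesis using S rA r0 by simp
      next
        case False
        then have "?A \<inter> {w. w \<in> ?F (t - 1)} \<noteq> ?A" by auto
        then have "card (?A \<inter> {w. w \<in> ?F (t - 1)}) < card ?A" using finA
          by (intro psubset_card_mono) auto
        then have "real (card (?A \<inter> {w. w \<in> ?F (t - 1)})) \<le> real (card ?A) - 1" by linarith
        then show ?thesis using S rA r0 b by simp
      qed
    qed
  qed
  have diff: "(\<Sum>v\<in>V. x v t - x v (t - 1)) = real (card (?F t)) - real (card (?F (t - 1)))" for t
  proof -
    have "(\<Sum>v\<in>V. x v s) = real (card (?F s))" for s
    proof -
      have "(\<Sum>v\<in>V. x v s) = real (card (V \<inter> {v. v \<in> ?F s}))" unfolding x_def using fin by simp
      also have "V \<inter> {v. v \<in> ?F s} = ?F s" using FV by auto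
      finally show ?thesis .
    qed
    then show ?thesis by (simp add: sum_subtractf)
  qed
  have c9: "\<forall>t \<in> {1..T}. (1 / real (card V)) * (\<Sum>v\<in>V. x v t - x v (t - 1)) - z t \<le> 0"
  proof
    fix t assume t: "t \<in> {1..T}"
    show "(1 / real (card V)) * (\<Sum>v\<in>V. x v t - x v (t - 1)) - z t \<le> 0"
    proof (cases "?F t = ?F (t - 1)")
      case True then show ?thesis using diff[of t] unfolding z_def by simp
    next
      case False
      have "card (?F t) \<le> card V" using FV fin by (rule card_mono[rotated])
      then have d: "(\<Sum>v\<in>V. x v t - x v (t - 1)) \<le> real (card V)" using diff[of t] by simp
      have "(1 / real (card V)) * (\<Sum>v\<in>V. x v t - x v (t - 1)) \<le> 1"
      proof (cases "card V = 0")
        case True then show ?thesis by simp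
      next
        case False then show ?thesis using d by (simp add: field_simps)
      qed
      then show ?thesis using False unfolding z_def by simp
    qed
  qed
  have c10: "\<forall>t \<in> {1..T}. z t - (\<Sum>v\<in>V. x v t - x v (t - 1)) \<le> 0"
  proof
    fix t assume t: "t \<in> {1..T}"
    show "z t - (\<Sum>v\<in>V. x v t - x v (t - 1)) \<le> 0"
    proof (cases "?F t = ?F (t - 1)")
      case True then show ?thesis using diff[of t] unfolding z_def by simp
    next
      case False
      have finF: "finite (?F t)" using FV fin finite_subset by metis
      have "card (?F (t - 1)) < card (?F t)" using Fm[of t] False finF by (intro psubset_card_mono) auto
      then show ?thesis using diff[of t] False unfolding z_def by simp
    qed
  qed
  have tsm: "TSM V E T x y z" unfolding TSM_def by (intro conjI c1 c2 c3 c4 c5 c6 c7 c8 c9 c10)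
  have sx: "(\<Sum>v\<in>V. x v 0) = real (card C)"
  proof -
    have "(\<Sum>v\<in>V. x v 0) = real (card (V \<inter> {v. v \<in> C}))" unfolding x_def using fin by simp
    also have "V \<inter> {v. v \<in> C} = C" using CV by auto
    finally show ?thesis .
  qed
  have sz: "(\<Sum>t\<in>{1..T}. z t) = real (LEAST t. ?F t = V)"
  proof -
    have "(\<Sum>t\<in>{1..T}. z t) = real (card ({1..T} \<inter> {t. ?F t \<noteq> ?F (t - 1)}))" unfolding z_def by simp
    also have "{1..T} \<inter> {t. ?F t \<noteq> ?F (t - 1)} = {t \<in> {1..T}. ?F t \<noteq> ?F (t - 1)}" by auto
    also have "\<dots> = {1..(LEAST t. ?F t = V)}" using count_steps(1)[OF CV FT] .
    finally show ?thesis by simp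
  qed
  show ?thesis using tsm sx sz by blast
qed

lemma sum_steps:
  assumes CV: "C \<subseteq> V" and FT: "Fi V E C T = V"
  shows "(\<Sum>t\<in>{1..T}. (of_bool (Fi V E C t \<noteq> Fi V E C (t - 1)) :: real)) = real (LEAST t. Fi V E C t = V)"
proof -
  let ?F = "Fi V E C"
  have "(\<Sum>t\<in>{1..T}. (of_bool (?F t \<noteq> ?F (t - 1)) :: real)) = real (card ({1..T} \<inter> {t. ?F t \<noteq> ?F (t - 1)}))" by simp
  also have "{1..T} \<inter> {t. ?F t \<noteq> ?F (t - 1)} = {t \<in> {1..T}. ?F t \<noteq> ?F (t - 1)}" by auto
  also have "\<dots> = {1..(LEAST t. ?F t = V)}" using count_steps(1)[OF CV FT] .
  finally show ?thesis by simp
qed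

lemma zfs_FT:
  assumes G: "simple_graph V E" and ne: "V \<noteq> {}" and zf: "zero_forcing_set V E D"
  shows "Fi V E D (card V - 1) = V"
proof -
  have fin: "finite V" using sg_fin[OF G] .
  have DV: "D \<subseteq> V" and fl: "filled V E D = V" using zf unfolding zero_forcing_set_def by auto
  obtain q where q: "Fi V E D q = V" using finite_V_Fi[OF fin DV fl] by blast
  have "D \<noteq> {}"
  proof
    assume "D = {}"
    then have "Fi V E D q = {}" using Fi_empty by simp
    then show False using q ne by simp
  qed
  then show ?thesis using Fi_T[OF fin DV _ q] by simp
qed

lemma zfs_from_FT:
  assumes G: "simple_graph V E" and CV: "C \<subseteq> V" and FT: "Fi V E C T = V"
  shows "zero_forcing_set V E C"
proof -
  have "V \<subseteq> filled V E C" using FT Fi_filled[of V E C T] by simp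
  moreover have "filled V E C \<subseteq> V" using filled_sub[OF CV] .
  ultimately show ?thesis unfolding zero_forcing_set_def using CV by auto
qed

lemma zfs_solution:
  assumes G: "simple_graph V E" and ne: "V \<noteq> {}" and zf: "zero_forcing_set V E D"
    and T: "T = card V - 1"
  shows "\<exists>p. prop_time V E D = enat p \<and> p \<le> T \<and>
     (\<exists>x y z. TSM V E T x y z \<and> (\<Sum>v\<in>V. x v 0) = real (card D) \<and> (\<Sum>t\<in>{1..T}. z t) = real p)"
proof -
  have DV: "D \<subseteq> V" using zf unfolding zero_forcing_set_def by auto
  have FT: "Fi V E D T = V" using zfs_FT[OF G ne zf] T by simp
  obtain x y z where "TSM V E T x y z" "(\<Sum>v\<in>V. x v 0) = real (card D)"
     "(\<Sum>t\<in>{1..T}. z t) = real (LEAST t. Fi V E D t = V)"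
    using tsm_complete[OF G DV FT] by (elim exE conjE)
  then show ?thesis
    using prop_time_Fi[OF FT] count_steps(2)[OF DV FT] by (intro exI conjI) auto
qed

lemma min_zfs_exists:
  assumes G: "simple_graph V E"
  shows "\<exists>D. min_zero_forcing_set V E D"
proof -
  have "V \<subseteq> filled V E V"
  proof
    fix v assume "v \<in> V" then show "v \<in> filled V E V" by (rule filled.init)
  qed
  then have zV: "zero_forcing_set V E V" unfolding zero_forcing_set_def using filled_sub[of V V E] by auto
  define Pn where "Pn n \<longleftrightarrow> (\<exists>D. zero_forcing_set V E D \<and> card D = n)" for n
  have "Pn (card V)" unfolding Pn_def using zV by auto
  then have "Pn (Least Pn)" by (rule LeastI)
  then obtain D where D: "zero_forcing_set V E D" "card D = Least Pn" unfolding Pn_def by auto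
  have "card D \<le> card D'" if D': "zero_forcing_set V E D'" for D'
  proof -
    have "Pn (card D')" unfolding Pn_def using D' by auto
    then have "Least Pn \<le> card D'" by (rule Least_le)
    then show ?thesis using D(2) by simp
  qed
  then have "min_zero_forcing_set V E D" unfolding min_zero_forcing_set_def using D(1) by simp
  then show ?thesis by (rule exI)
qed

lemma obj_small:
  assumes "p \<le> T"
  shows "(1 / (2 * real T)) * real p \<le> 1 / 2" and "(1 / (2 * real T)) * real p \<ge> 0"
proof -
  show "(1 / (2 * real T)) * real p \<ge> 0" by simp
  show "(1 / (2 * real T)) * real p \<le> 1 / 2"
  proof (cases "T = 0")
    case True then show ?thesis by simp
  next
    case False
    then show ?thesis using assms by (simp add: field_simps)
  qed
qed

theorem corollary4p8:
  fixes V :: "'a set" and E :: "'a \<Rightarrow> 'a \<Rightarrow> bool" and k :: int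
    and x :: "'a \<Rightarrow> nat \<Rightarrow> real" and y :: "'a \<times> 'a \<Rightarrow> nat \<Rightarrow> real" and z :: "nat \<Rightarrow> real"
  assumes G: "simple_graph V E" and ne: "V \<noteq> {}"
    and Tdef: "T = card V - 1"
    and kPT: "k \<le> 0 \<or> enat (nat k) \<le> PT V E"
    and feas: "TSM_k V E T k x y z"
    and opt: "\<forall>x' y' z'. TSM_k V E T k x' y' z' \<longrightarrow> TSM_obj V T x z \<le> TSM_obj V T x' z'"
  defines "C \<equiv> {v \<in> V. x v 0 = 1}"
  shows "min_zero_forcing_set V E C \<and>
         (\<exists>m::nat. prop_time V E C = enat m \<and> real m = (\<Sum>t\<in>{1..T}. z t) \<and> int m \<ge> k \<and>
            \<not> (\<exists>C'. min_zero_forcing_set V E C' \<and>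
                   (\<exists>m'. prop_time V E C' = enat m' \<and> k < int m' \<and> m' < m)))"
proof -
  have fin: "finite V" using sg_fin[OF G] .
  have tsm: "TSM V E T x y z" and zk: "(\<Sum>t\<in>{1..T}. z t) \<ge> real_of_int k"
    using feas unfolding TSM_k_def by auto
  have CV: "C \<subseteq> V" unfolding C_def by auto
  have FT: "Fi V E C T = V" using tsm_sound(1)[OF G tsm] unfolding C_def .
  have zt: "\<And>t. t \<in> {1..T} \<Longrightarrow> z t = of_bool (Fi V E C t \<noteq> Fi V E C (t - 1))"
    using tsm_sound(2)[OF G tsm] unfolding C_def by blast
  have x0: "(\<Sum>v\<in>V. x v 0) = real (card C)" using tsm_sound(3)[OF G tsm] unfolding C_def .
  define p where "p = (LEAST t. Fi V E C t = V)"
  have ptC: "prop_time V E C = enat p" unfolding p_def by (rule prop_time_Fi[OF FT])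
  have pT: "p \<le> T" unfolding p_def by (rule count_steps(2)[OF CV FT])
  have sz: "(\<Sum>t\<in>{1..T}. z t) = real p"
  proof -
    have "(\<Sum>t\<in>{1..T}. z t) = (\<Sum>t\<in>{1..T}. (of_bool (Fi V E C t \<noteq> Fi V E C (t - 1)) :: real))"
      using zt by (intro sum.cong) auto
    also have "\<dots> = real p" unfolding p_def by (rule sum_steps[OF CV FT])
    finally show ?thesis .
  qed
  have pk: "int p \<ge> k" using zk sz by simp
  have zfC: "zero_forcing_set V E C" by (rule zfs_from_FT[OF G CV FT])
  have objC: "TSM_obj V T x z = real (card C) + (1 / (2 * real T)) * real p"
    unfolding TSM_obj_def using x0 sz by simp
  \<comment> \<open>any zero forcing set with propagation time at least k gives a competitor\<close>
  have compete: "real (card C) + (1 / (2 * real T)) * real p \<le> real (card D) + (1 / (2 * real T)) * real q"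
    if zD: "zero_forcing_set V E D" and qD: "prop_time V E D = enat q" and kq: "k \<le> int q" for D q
  proof -
    obtain q' where q': "prop_time V E D = enat q'" "q' \<le> T"
      and ex: "\<exists>x y z. TSM V E T x y z \<and> (\<Sum>v\<in>V. x v 0) = real (card D) \<and> (\<Sum>t\<in>{1..T}. z t) = real q'"
      using zfs_solution[OF G ne zD Tdef] by blast
    have qq: "q' = q" using q'(1) qD by simp
    obtain x' y' z' where s: "TSM V E T x' y' z'" "(\<Sum>v\<in>V. x' v 0) = real (card D)"
      "(\<Sum>t\<in>{1..T}. z' t) = real q'" using ex by blast
    have "TSM_k V E T k x' y' z'" unfolding TSM_k_def using s kq qq by simp
    then have "TSM_obj V T x z \<le> TSM_obj V T x' z'" using opt by simp
    then show ?thesis using objC s qq unfolding TSM_obj_def by simp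
  qed
  obtain D q where mD: "min_zero_forcing_set V E D" and qD: "prop_time V E D = enat q" and kq: "k \<le> int q"
  proof -
    show ?thesis
    proof (cases "k \<le> 0")
      case True
      obtain D where mD: "min_zero_forcing_set V E D" using min_zfs_exists[OF G] by blast
      then have zD: "zero_forcing_set V E D" unfolding min_zero_forcing_set_def by simp
      obtain q where "prop_time V E D = enat q" using zfs_solution[OF G ne zD Tdef] by blast
      then show ?thesis using that mD True by simp
    next
      case False
      then have kle: "enat (nat k) \<le> PT V E" using kPT by simp
      let ?M = "{D. min_zero_forcing_set V E D}"
      have "?M \<subseteq> Pow V" unfolding min_zero_forcing_set_def zero_forcing_set_def by auto
      then have finM: "finite ?M" using fin finite_subset by (metis finite_Pow_iff)
      have neM: "?M \<noteq> {}" using min_zfs_exists[OF G] by simp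
      have "PT V E = Max (prop_time V E ` ?M)" unfolding PT_def
        using finM neM by (intro cSup_eq_Max) auto
      moreover have "Max (prop_time V E ` ?M) \<in> prop_time V E ` ?M" using finM neM by (intro Max_in) auto
      ultimately obtain D where D: "D \<in> ?M" "prop_time V E D = PT V E" by auto
      then have mD: "min_zero_forcing_set V E D" by simp
      then have zD: "zero_forcing_set V E D" unfolding min_zero_forcing_set_def by simp
      obtain q where q: "prop_time V E D = enat q" using zfs_solution[OF G ne zD Tdef] by blast
      then have "nat k \<le> q" using kle D(2) by simp
      then have "k \<le> int q" using False by simp
      then show ?thesis using that mD q by simp
    qed
  qed
  have zD: "zero_forcing_set V E D" using mD unfolding min_zero_forcing_set_def by simp
  obtain q' where q': "prop_time V E D = enat q'" "q' \<le> T" using zfs_solution[OF G ne zD Tdef] by blast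
  have qT: "q \<le> T" using q' qD by simp
  have c1: "real (card C) + (1 / (2 * real T)) * real p \<le> real (card D) + (1 / (2 * real T)) * real q"
    by (rule compete[OF zD qD kq])
  have "real (card C) < real (card D) + 1" using c1 obj_small[OF qT] obj_small[OF pT] by linarith
  then have cCD: "card C \<le> card D" by simp
  have minC: "min_zero_forcing_set V E C"
    unfolding min_zero_forcing_set_def
  proof (intro conjI allI impI)
    show "zero_forcing_set V E C" by (fact zfC)
    fix D' assume "zero_forcing_set V E D'"
    then have "card D \<le> card D'" using mD unfolding min_zero_forcing_set_def by simp
    then show "card C \<le> card D'" using cCD by simp
  qed
  have noC: "\<not> (\<exists>C'. min_zero_forcing_set V E C' \<and>
                   (\<exists>m'. prop_time V E C' = enat m' \<and> k < int m' \<and> m' < p))"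
  proof
    assume "\<exists>C'. min_zero_forcing_set V E C' \<and> (\<exists>m'. prop_time V E C' = enat m' \<and> k < int m' \<and> m' < p)"
    then obtain C' m' where mC': "min_zero_forcing_set V E C'" and pt': "prop_time V E C' = enat m'"
      and km: "k < int m'" and mp: "m' < p" by blast
    have zC': "zero_forcing_set V E C'" using mC' unfolding min_zero_forcing_set_def by simp
    have c2: "real (card C) + (1 / (2 * real T)) * real p \<le> real (card C') + (1 / (2 * real T)) * real m'"
      using compete[OF zC' pt'] km by simp
    have "card C' \<le> card C" using mC' zfC unfolding min_zero_forcing_set_def by simp
    then have "(1 / (2 * real T)) * real p \<le> (1 / (2 * real T)) * real m'" using c2 by simp
    moreover have "T > 0" using mp pT by simp
    ultimately have "real p \<le> real m'" by (simp add: field_simps)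
    then show False using mp by simp
  qed
  show ?thesis
  proof (intro conjI exI[of _ p])
    show "min_zero_forcing_set V E C" by (fact minC)
    show "prop_time V E C = enat p" by (fact ptC)
    show "real p = (\<Sum>t\<in>{1..T}. z t)" using sz by simp
    show "int p \<ge> k" by (fact pk)
    show "\<not> (\<exists>C'. min_zero_forcing_set V E C' \<and>
                   (\<exists>m'. prop_time V E C' = enat m' \<and> k < int m' \<and> m' < p))" by (fact noC)
  qed
qed

end
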